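(* Assume in addition that $l$ is $\mu$-strongly convex on $\mathcal{X}$ for some $\mu>0$. Consider SPDHG (as in the context) run with step-sizes $\beta^{k+1} = \frac{2}{\mu(k+2)+2L}$ and non-uniform weights $\alpha^{k+1}=\frac{2(k+1)}{(t+1)(t+2)}$, $k=0,\dots,t$. Let $(y^*,x^* )$ be any saddle point of $\min_{x\in\mathcal{X}}\max_{y\in\mathcal{Y}}P(y,x)$. Then for every $t\ge0$, $$0\le\mathbb{E}\left[P(y^*,\bar{x}^t) - P(\bar{y}^t,x^* )\right] \le \frac{D_y^2}{s(t+2)} + \frac{L D_x^2}{t+2} + \frac{4\lambda_{\max}(F^\top F)D_y^2+4\sigma^2}{\mu(t+2)},$$ i.e. convergence at rate $O(1/t)$ in expectation.
   Context: Setting: $\mathcal{X}\subset\mathbb{R}^d$ is a nonempty convex compact set with diameter $D_x$ (so $\|x-x'\|\le D_x$ for all $x,x'\in\mathcal{X}$), $\mathcal{Y}\subset\mathbb{R}^l$ is a nonempty convex compact set with diameter $D_y$, $F\in\mathbb{R}^{l\times d}$, and $\lambda_{\max}(F^\top F)$ denotes the largest eigenvalue of $F^\top F$. The loss is $l(x)=\mathbb{E}_\xi[l(x,\xi)]$, a convex, continuously differentiable function on $\mathcal{X}$ with $L$-Lipschitz gradient: $\|\nabla l(x_1)-\nabla l(x_2)\|\le L\|x_1-x_2\|$ for all $x_1,x_2\in\mathcal{X}$. $\mu$-strong convexity means $l(y)-l(x)-(y-x)^\top\nabla l(x)\ge\frac{\mu}{2}\|y-x\|^2$ for all $x,y\in\mathcal{X}$.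 The stochastic gradient $\nabla l(x,\xi)$ satisfies, for every $x\in\mathcal{X}$: $\mathbb{E}[\nabla l(x,\xi)]=\nabla l(x)$, $\mathbb{E}\|\nabla l(x,\xi)-\nabla l(x)\|^2\le\sigma^2$, and $\mathbb{E}\exp\left(\|\nabla l(x,\xi)-\nabla l(x)\|^2/\sigma^2\right)\le \exp(1)$, for a constant $\sigma>0$. The saddle function is $P(y,x)=l(x)+\langle y,Fx\rangle$ for $x\in\mathcal{X},y\in\mathcal{Y}$; a saddle point $(y^*,x^* )$ satisfies $P(y,x^* )\le P(y^*,x^* )\le P(y^*,x)$ for all $(y,x)\in\mathcal{Y}\times\mathcal{X}$ (assumed to exist). SPDHG: fix $s>0$, $x^0\in\mathcal{X}$, $y^0\in\mathcal{Y}$, and a sequence of step-sizes $\beta^{k+1}>0$. For $k=0,1,2,\dots$, draw a sample $\xi^{k+1}$ independently of the past (i.i.d. samples), and set $$y^{k+1}=\arg\max_{y\in\mathcal{Y}}\Big\{P(y,x^k)-\tfrac{1}{2s}\|y-y^k\|^2\Big\},\qquad x^{k+1}=\Pi_{\mathcal{X}}\Big[x^k-\beta^{k+1}\big(\nabla l(x^k,\xi^{k+1})+F^\top y^{k+1}\big)\Big],$$ where $\Pi_{\mathcal{X}}$ is Euclidean projection onto $\mathcal{X}$. Given weights $\alpha^{k+1}\ge0$ with $\sum_{k=0}^t\alpha^{k+1}=1$, the output after $t$ steps is $\bar x^t=\sum_{k=0}^t\alpha^{k+1}x^{k+1}$, $\bar y^t=\sum_{k=0}^t\alpha^{k+1}y^{k+1}$.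 *)

theory Defs
  imports "HOL-Analysis.Analysis" "HOL-Probability.Probability"
begin

definition Psad :: "(real^'d \<Rightarrow> real) \<Rightarrow> real^'d^'l \<Rightarrow> real^'l \<Rightarrow> real^'d \<Rightarrow> real" where
  "Psad l F y x = l x + y \<bullet> (F *v x)"

definition lambda_max :: "real^'n^'n \<Rightarrow> real" where
  "lambda_max A = Max {lam. \<exists>v. v \<noteq> 0 \<and> A *v v = lam *\<^sub>R v}"

text \<open>SPDHG iterates (y^k, x^k) driven by a sample sequence w; the sample used in step k
  (the paper's xi^{k+1}) is w k. beta j is the paper's beta^j.\<close>
fun spdhg :: "(real^'d \<Rightarrow> real) \<Rightarrow> (real^'d \<Rightarrow> 'e \<Rightarrow> real^'d) \<Rightarrow> real^'d^'l
   \<Rightarrow> (real^'d) set \<Rightarrow> (real^'l) set \<Rightarrow> real \<Rightarrow> (nat \<Rightarrow> real) \<Rightarrow> real^'l \<Rightarrow> real^'d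
   \<Rightarrow> (nat \<Rightarrow> 'e) \<Rightarrow> nat \<Rightarrow> (real^'l) \<times> (real^'d)" where
  "spdhg l G F X Y s beta y0 x0 w 0 = (y0, x0)"
| "spdhg l G F X Y s beta y0 x0 w (Suc k) =
     (let (y, x) = spdhg l G F X Y s beta y0 x0 w k;
          y' = arg_max (\<lambda>v. Psad l F v x - (1 / (2 * s)) * (norm (v - y))\<^sup>2) (\<lambda>v. v \<in> Y);
          x' = closest_point X (x - beta (Suc k) *\<^sub>R (G x (w k) + transpose F *v y'))
      in (y', x'))"

definition xbar where
  "xbar l G F X Y s beta y0 x0 alpha w t =
     (\<Sum>k\<le>t. alpha (Suc k) *\<^sub>R snd (spdhg l G F X Y s beta y0 x0 w (Suc k)))"

definition ybar where
  "ybar l G F X Y s beta y0 x0 alpha w t =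
     (\<Sum>k\<le>t. alpha (Suc k) *\<^sub>R fst (spdhg l G F X Y s beta y0 x0 w (Suc k)))"

end

theory Submission
  imports Defs
begin


lemma descent:
  fixes l :: "'a::real_inner \<Rightarrow> real" and gl :: "'a \<Rightarrow> 'a"
  assumes cX: "convex X" and x: "x \<in> X" and y: "y \<in> X"
    and der: "\<And>z. z \<in> X \<Longrightarrow> (l has_derivative (\<lambda>h. gl z \<bullet> h)) (at z within X)"
    and lip: "\<And>x1 x2. x1 \<in> X \<Longrightarrow> x2 \<in> X \<Longrightarrow> norm (gl x1 - gl x2) \<le> L * norm (x1 - x2)"
  shows "l y \<le> l x + gl x \<bullet> (y - x) + L / 2 * (norm (y - x))\<^sup>2"
proof -
  define d where "d = y - x"
  define \<phi> where "\<phi> = (\<lambda>\<tau>::real. l (x + \<tau> *\<^sub>R d) - \<tau> * (gl x \<bullet> d) - L / 2 * \<tau>\<^sup>2 * (norm d)\<^sup>2)"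
  have seg: "x + \<tau> *\<^sub>R d \<in> X" if "\<tau> \<in> {0..1}" for \<tau>
  proof -
    have "x + \<tau> *\<^sub>R d = (1 - \<tau>) *\<^sub>R x + \<tau> *\<^sub>R y" by (simp add: d_def algebra_simps)
    then show ?thesis using convexD_alt[OF cX x y, of \<tau>] that by auto
  qed
  have dphi: "(\<phi> has_real_derivative ((gl (x + \<tau> *\<^sub>R d) \<bullet> d) - gl x \<bullet> d - L * \<tau> * (norm d)\<^sup>2))
      (at \<tau> within {0..1})" if "\<tau> \<in> {0..1}" for \<tau>
  proof -
    have lin: "((\<lambda>\<tau>. x + \<tau> *\<^sub>R d) has_derivative (\<lambda>h. h *\<^sub>R d)) (at \<tau> within {0..1})"
      by (auto intro!: derivative_eq_intros)
    have c: "((\<lambda>\<tau>. l (x + \<tau> *\<^sub>R d)) has_derivative (\<lambda>h. gl (x + \<tau> *\<^sub>R d) \<bullet> (h *\<^sub>R d))) (at \<tau> within {0..1})"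
    proof -
      have sub: "(\<lambda>\<tau>. x + \<tau> *\<^sub>R d) ` {0..1} \<subseteq> X" using seg by auto
      show ?thesis using has_derivative_in_compose2[of X l "\<lambda>z h. gl z \<bullet> h", OF der sub that lin] by simp
    qed
    then have c': "((\<lambda>\<tau>. l (x + \<tau> *\<^sub>R d)) has_real_derivative (gl (x + \<tau> *\<^sub>R d) \<bullet> d)) (at \<tau> within {0..1})"
      unfolding has_field_derivative_def by (simp add: mult.commute[of _ "gl (x + \<tau> *\<^sub>R d) \<bullet> d"])
    have e: "((\<lambda>\<tau>. \<tau> * (gl x \<bullet> d) + L / 2 * \<tau>\<^sup>2 * (norm d)\<^sup>2) has_real_derivative (gl x \<bullet> d + L * \<tau> * (norm d)\<^sup>2)) (at \<tau> within {0..1})"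
      by (auto intro!: derivative_eq_intros simp: power2_eq_square)
    have "\<phi> = (\<lambda>\<tau>. l (x + \<tau> *\<^sub>R d) - (\<tau> * (gl x \<bullet> d) + L / 2 * \<tau>\<^sup>2 * (norm d)\<^sup>2))"
      by (auto simp: \<phi>_def)
    then show ?thesis using DERIV_diff[OF c' e] by (simp add: algebra_simps)
  qed
  have "\<phi> 1 \<le> \<phi> 0"
  proof (rule DERIV_nonpos_imp_decreasing_open[of 0 1 \<phi>])
    show "continuous_on {0..1} \<phi>"
      using dphi DERIV_continuous continuous_on_eq_continuous_within by blast
    fix \<tau> :: real assume t: "0 < \<tau>" "\<tau> < 1"
    have D: "DERIV \<phi> \<tau> :> ((gl (x + \<tau> *\<^sub>R d) \<bullet> d) - gl x \<bullet> d - L * \<tau> * (norm d)\<^sup>2)"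
      using dphi[of \<tau>] t at_within_Icc_at[of 0 \<tau> 1] by auto
    have "(gl (x + \<tau> *\<^sub>R d) - gl x) \<bullet> d \<le> norm (gl (x + \<tau> *\<^sub>R d) - gl x) * norm d"
      by (rule norm_cauchy_schwarz)
    also have "\<dots> \<le> (L * norm ((x + \<tau> *\<^sub>R d) - x)) * norm d"
      using lip[OF seg x, of \<tau>] t by (intro mult_right_mono) auto
    also have "\<dots> = L * \<tau> * (norm d)\<^sup>2" using t by (simp add: power2_eq_square)
    finally show "\<exists>y. DERIV \<phi> \<tau> :> y \<and> y \<le> 0" using D by (intro exI[of _ _]) (auto simp: inner_diff_left)
  qed simp
  then show ?thesis by (simp add: \<phi>_def d_def)
qed



lemma argmax_cp:
  fixes Y :: "(real^'l) set" and F :: "real^'d^'l"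
  assumes Y: "Y \<noteq> {}" "convex Y" "compact Y" and s: "s > 0"
  shows "arg_max (\<lambda>v. Psad l F v x - (1 / (2 * s)) * (norm (v - y))\<^sup>2) (\<lambda>v. v \<in> Y)
         = closest_point Y (y + s *\<^sub>R (F *v x))"
proof -
  define z where "z = y + s *\<^sub>R (F *v x)"
  define K where "K = l x + y \<bullet> (F *v x) + s / 2 * (norm (F *v x))\<^sup>2"
  have eq: "Psad l F v x - (1 / (2 * s)) * (norm (v - y))\<^sup>2 = K - (1 / (2 * s)) * (norm (v - z))\<^sup>2" for v
  proof -
    have "(norm (v - z))\<^sup>2 = (norm (v - y))\<^sup>2 - 2 * s * ((v - y) \<bullet> (F *v x)) + s\<^sup>2 * (norm (F *v x))\<^sup>2"
      unfolding z_def power2_norm_eq_inner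
      by (simp add: inner_diff_left inner_diff_right inner_add_left inner_add_right inner_commute power2_eq_square algebra_simps)
    then have "(norm (v - z))\<^sup>2 / (2 * s) = ((norm (v - y))\<^sup>2 - 2 * s * ((v - y) \<bullet> (F *v x)) + s\<^sup>2 * (norm (F *v x))\<^sup>2) / (2 * s)"
      by simp
    also have "\<dots> = (norm (v - y))\<^sup>2 / (2 * s) - ((v - y) \<bullet> (F *v x)) + s / 2 * (norm (F *v x))\<^sup>2"
      using s by (simp add: field_simps power2_eq_square)
    finally show ?thesis unfolding K_def Psad_def by (simp add: inner_diff_left)
  qed
  have cl: "closed Y" using Y compact_imp_closed by auto
  let ?c = "closest_point Y z"
  have cY: "?c \<in> Y" using closest_point_in_set[OF cl Y(1)] .
  have cle: "norm (?c - z) \<le> norm (v - z)" if "v \<in> Y" for v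
    using closest_point_le[OF cl that, of z] by (simp add: dist_norm norm_minus_commute)
  have mono: "(1 / (2 * s)) * (norm (a - z))\<^sup>2 \<le> (1 / (2 * s)) * (norm (b - z))\<^sup>2 \<longleftrightarrow> norm (a - z) \<le> norm (b - z)" for a b
  proof -
    have "(1 / (2 * s)) * (norm (a - z))\<^sup>2 \<le> (1 / (2 * s)) * (norm (b - z))\<^sup>2 \<longleftrightarrow> (norm (a - z))\<^sup>2 \<le> (norm (b - z))\<^sup>2"
      using s by (intro mult_le_cancel_left_pos) simp
    also have "\<dots> \<longleftrightarrow> norm (a - z) \<le> norm (b - z)" by (simp add: power_mono_iff)
    finally show ?thesis .
  qed
  have "is_arg_max (\<lambda>v. Psad l F v x - (1 / (2 * s)) * (norm (v - y))\<^sup>2) (\<lambda>v. v \<in> Y) m \<longleftrightarrow> m = ?c" for m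
  proof
    assume m: "is_arg_max (\<lambda>v. Psad l F v x - (1 / (2 * s)) * (norm (v - y))\<^sup>2) (\<lambda>v. v \<in> Y) m"
    then have mY: "m \<in> Y" and ge: "\<And>v. v \<in> Y \<Longrightarrow> norm (m - z) \<le> norm (v - z)"
      unfolding is_arg_max_def eq using mono by (auto simp: not_less)
    show "m = ?c"
      using closest_point_unique[OF Y(2) cl mY] ge by (auto simp: dist_norm norm_minus_commute)
  next
    assume "m = ?c"
    then show "is_arg_max (\<lambda>v. Psad l F v x - (1 / (2 * s)) * (norm (v - y))\<^sup>2) (\<lambda>v. v \<in> Y) m"
      unfolding is_arg_max_def eq using cY cle mono by (auto simp: not_less)
  qed
  then have "(\<lambda>m. is_arg_max (\<lambda>v. Psad l F v x - (1 / (2 * s)) * (norm (v - y))\<^sup>2) (\<lambda>v. v \<in> Y) m) = (\<lambda>m. m = ?c)"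
    by blast
  then show ?thesis unfolding arg_max_def z_def by simp
qed

lemma spdhg_Suc':
  fixes Y :: "(real^'l) set" and F :: "real^'d^'l"
  assumes Y: "Y \<noteq> {}" "convex Y" "compact Y" and s: "s > 0"
  shows "spdhg l G F X Y s beta y0 x0 w (Suc k) =
     (let p = spdhg l G F X Y s beta y0 x0 w k;
          y' = closest_point Y (fst p + s *\<^sub>R (F *v snd p))
      in (y', closest_point X (snd p - beta (Suc k) *\<^sub>R (G (snd p) (w k) + transpose F *v y'))))"
proof -
  obtain a b where p: "spdhg l G F X Y s beta y0 x0 w k = (a, b)" by (cases "spdhg l G F X Y s beta y0 x0 w k")
  show ?thesis using argmax_cp[OF Y s, of l F b a] by (simp add: p Let_def)
qed

lemma spdhg_dep:
  assumes "\<And>i. i < k \<Longrightarrow> w i = w' i"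
  shows "spdhg l G F X Y s beta y0 x0 w k = spdhg l G F X Y s beta y0 x0 w' k"
  using assms by (induction k) (auto simp: Let_def split: prod.split)



lemma ATF: "((transpose F ** F) *v v) \<bullet> w = (F *v v) \<bullet> (F *v (w::real^'d))"
  for F :: "real^'d^'l"
  unfolding matrix_vector_mul_assoc[symmetric] transpose_matrix_vector dot_lmul_matrix ..

lemma tri_quad:
  fixes W b :: real
  assumes W: "W \<ge> 0" and h: "\<And>\<tau>. 2 * \<tau> * W + \<tau>\<^sup>2 * b \<le> 0"
  shows "W = 0"
proof (rule ccontr)
  assume "W \<noteq> 0" then have Wp: "W > 0" using W by auto
  define \<tau> where "\<tau> = W / (\<bar>b\<bar> + 1)"
  have tp: "\<tau> > 0" using Wp by (simp add: \<tau>_def)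
  have tb: "\<tau> * \<bar>b\<bar> \<le> W" using Wp unfolding \<tau>_def by (simp add: field_simps)
  have "\<tau>\<^sup>2 * b \<ge> - (\<tau> * (\<tau> * \<bar>b\<bar>))" using tp by (cases "b < 0") (simp_all add: power2_eq_square)
  moreover have "\<tau> * (\<tau> * \<bar>b\<bar>) \<le> \<tau> * W" using tb tp by (intro mult_left_mono) auto
  ultimately have "2 * \<tau> * W + \<tau>\<^sup>2 * b \<ge> \<tau> * W" by linarith
  moreover have "\<tau> * W > 0" using tp Wp by simp
  ultimately show False using h[of \<tau>] by linarith
qed

lemma lambda_max_prop:
  fixes F :: "real^'d^'l"
  shows "lambda_max (transpose F ** F) \<ge> 0 \<and>
         (\<forall>d. (norm (F *v d))\<^sup>2 \<le> lambda_max (transpose F ** F) * (norm d)\<^sup>2)"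
proof -
  define A where "A = transpose F ** F"
  define f where "f = (\<lambda>v::real^'d. (norm (F *v v))\<^sup>2)"
  have cf: "continuous_on (sphere 0 1) f" unfolding f_def by (intro continuous_intros)
  obtain u :: "real^'d" where "norm u = 1" using vector_choose_size[of 1] by auto
  then have ne: "sphere (0::real^'d) 1 \<noteq> {}" by auto
  obtain e where eS: "e \<in> sphere 0 1" and emax: "\<And>v. v \<in> sphere 0 1 \<Longrightarrow> f v \<le> f e"
    using continuous_attains_sup[OF compact_sphere ne cf] by blast
  define c where "c = f e"
  have ne1: "norm e = 1" using eS by simp
  have bound: "(norm (F *v d))\<^sup>2 \<le> c * (norm d)\<^sup>2" for d
  proof (cases "d = 0")
    case True then show ?thesis by simp
  next
    case False
    then have np: "norm d > 0" by simp
    have "(1 / norm d) *\<^sub>R d \<in> sphere 0 1" using np by simp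
    then have "f ((1 / norm d) *\<^sub>R d) \<le> c" using emax c_def by blast
    then have "(norm (F *v d))\<^sup>2 / (norm d)\<^sup>2 \<le> c"
      unfolding f_def by (simp add: matrix_vector_mult_scaleR power_divide)
    then show ?thesis using np by (simp add: field_simps)
  qed
  have c0: "c \<ge> 0" unfolding c_def f_def by simp
  have eig: "A *v e = c *\<^sub>R e"
  proof -
    define w where "w = A *v e - c *\<^sub>R e"
    define b where "b = (norm (F *v w))\<^sup>2 - c * (norm w)\<^sup>2"
    have Aw: "(A *v e) \<bullet> w - c * (e \<bullet> w) = (norm w)\<^sup>2"
      by (simp add: w_def power2_norm_eq_inner inner_diff_left)
    have "2 * \<tau> * (norm w)\<^sup>2 + \<tau>\<^sup>2 * b \<le> 0" for \<tau>
    proof -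
      have "(norm (F *v (e + \<tau> *\<^sub>R w)))\<^sup>2 \<le> c * (norm (e + \<tau> *\<^sub>R w))\<^sup>2" by (rule bound)
      moreover have "(norm (F *v (e + \<tau> *\<^sub>R w)))\<^sup>2 = c + 2 * \<tau> * ((F *v e) \<bullet> (F *v w)) + \<tau>\<^sup>2 * (norm (F *v w))\<^sup>2"
        unfolding power2_norm_eq_inner c_def f_def
        by (simp add: matrix_vector_right_distrib matrix_vector_mult_scaleR inner_add_left inner_add_right
            inner_commute power2_eq_square algebra_simps)
      moreover have "(F *v e) \<bullet> (F *v w) = (A *v e) \<bullet> w" unfolding A_def ATF ..
      moreover have "(norm (e + \<tau> *\<^sub>R w))\<^sup>2 = 1 + 2 * \<tau> * (e \<bullet> w) + \<tau>\<^sup>2 * (norm w)\<^sup>2"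
        using ne1[unfolded norm_eq_1] unfolding power2_norm_eq_inner
        by (simp add: inner_add_left inner_add_right inner_commute power2_eq_square algebra_simps)
      ultimately have "c + 2 * \<tau> * ((A *v e) \<bullet> w) + \<tau>\<^sup>2 * (norm (F *v w))\<^sup>2 \<le> c * (1 + 2 * \<tau> * (e \<bullet> w) + \<tau>\<^sup>2 * (norm w)\<^sup>2)"
        by simp
      then have "2 * \<tau> * ((A *v e) \<bullet> w - c * (e \<bullet> w)) + \<tau>\<^sup>2 * b \<le> 0"
        unfolding b_def by (simp add: algebra_simps)
      then show ?thesis using Aw by simp
    qed
    then have "(norm w)\<^sup>2 = 0" by (intro tri_quad) auto
    then show ?thesis unfolding w_def by simp
  qed
  define S where "S = {lam. \<exists>v. v \<noteq> 0 \<and> A *v v = lam *\<^sub>R v}"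
  have cS: "c \<in> S" unfolding S_def using eig ne1 by (intro CollectI exI[of _ e]) auto
  define vv where "vv = (\<lambda>lam. SOME v. v \<noteq> 0 \<and> A *v v = lam *\<^sub>R v)"
  have vv: "vv lam \<noteq> 0 \<and> A *v vv lam = lam *\<^sub>R vv lam" if "lam \<in> S" for lam
  proof -
    from that obtain v where "v \<noteq> 0 \<and> A *v v = lam *\<^sub>R v" unfolding S_def by auto
    then show ?thesis unfolding vv_def by (rule someI)
  qed
  have le: "lam \<le> c" if "lam \<in> S" for lam
  proof -
    from vv[OF that] have v0: "vv lam \<noteq> 0" and av: "A *v vv lam = lam *\<^sub>R vv lam" by auto
    have "lam * (norm (vv lam))\<^sup>2 = (A *v vv lam) \<bullet> vv lam" by (simp add: av power2_norm_eq_inner)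
    also have "\<dots> = (norm (F *v vv lam))\<^sup>2" by (simp add: A_def ATF power2_norm_eq_inner)
    also have "\<dots> \<le> c * (norm (vv lam))\<^sup>2" by (rule bound)
    finally show ?thesis using v0 by simp
  qed
  have inj: "inj_on vv S"
  proof (rule inj_onI)
    fix a b assume a: "a \<in> S" and b: "b \<in> S" and eq: "vv a = vv b"
    have "a *\<^sub>R vv a = b *\<^sub>R vv a" using vv[OF a] vv[OF b] eq by metis
    then show "a = b" using vv[OF a] by simp
  qed
  have orth: "pairwise orthogonal (vv ` S)"
  proof (clarsimp simp: pairwise_def)
    fix a b assume a: "a \<in> S" and b: "b \<in> S" and ne: "vv a \<noteq> vv b"
    then have ab: "a \<noteq> b" by auto
    have "a * (vv a \<bullet> vv b) = (A *v vv a) \<bullet> vv b" using vv[OF a] by simp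
    also have "\<dots> = (A *v vv b) \<bullet> vv a" unfolding A_def ATF by (rule inner_commute)
    also have "\<dots> = b * (vv a \<bullet> vv b)" using vv[OF b] by (simp add: inner_commute)
    finally show "orthogonal (vv a) (vv b)" using ab by (simp add: orthogonal_def)
  qed
  have fin: "finite S"
    using pairwise_orthogonal_imp_finite[OF orth] finite_imageD[OF _ inj] by blast
  have "lambda_max A = c" unfolding lambda_max_def S_def[symmetric]
    using fin cS le by (intro Max_eqI) auto
  then show ?thesis using c0 bound unfolding A_def by auto
qed



lemma norm_sq_diff3: "(norm (a - b))\<^sup>2 = (norm (a - c))\<^sup>2 + 2 * ((a - c) \<bullet> (c - b)) + (norm (c - b))\<^sup>2"
  for a b c :: "'a::real_inner"
  unfolding power2_norm_eq_inner by (simp add: inner_diff_left inner_diff_right inner_commute)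

lemma quad_bound:
  fixes c n m :: real assumes m: "m > 0"
  shows "c * n - m * n\<^sup>2 \<le> c\<^sup>2 / (4 * m)"
proof -
  have "0 \<le> (c - 2 * m * n)\<^sup>2" by simp
  then have h: "4 * m * (c * n - m * n\<^sup>2) \<le> c\<^sup>2" by (simp add: power2_eq_square algebra_simps)
  have "c * n - m * n\<^sup>2 = (4 * m * (c * n - m * n\<^sup>2)) / (4 * m)" using m by simp
  also have "\<dots> \<le> c\<^sup>2 / (4 * m)" using h m by (intro divide_right_mono) auto
  finally show ?thesis .
qed

lemma step_ineq:
  fixes X :: "(real^'d) set" and Y :: "(real^'l) set" and F :: "real^'d^'l"
    and l :: "real^'d \<Rightarrow> real" and gl :: "real^'d \<Rightarrow> real^'d"
  assumes X: "X \<noteq> {}" "convex X" "closed X"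
    and Y: "Y \<noteq> {}" "convex Y" "bounded Y" "closed Y"
    and strong: "\<And>x y. x \<in> X \<Longrightarrow> y \<in> X \<Longrightarrow> l y - l x - (y - x) \<bullet> gl x \<ge> \<mu> / 2 * (norm (y - x))\<^sup>2"
    and desc: "\<And>x y. x \<in> X \<Longrightarrow> y \<in> X \<Longrightarrow> l y \<le> l x + gl x \<bullet> (y - x) + L / 2 * (norm (y - x))\<^sup>2"
    and s: "s > 0" and mu: "\<mu> > 0" and kk: "kk \<ge> 0"
    and u: "u \<in> X" and v: "v \<in> Y" and x: "x \<in> X"
    and yp: "yp = closest_point Y (y + s *\<^sub>R (F *v x))"
    and xp: "xp = closest_point X (x - \<beta> *\<^sub>R (g + transpose F *v yp))"
    and lam: "lam \<ge> 0" "\<And>d. (norm (F *v d))\<^sup>2 \<le> lam * (norm d)\<^sup>2"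
    and beta: "(\<beta> > 0 \<and> 1 / (2 * \<beta>) = \<mu> * (kk + 2) / 4 + L / 2) \<or> (\<forall>a\<in>X. \<forall>b\<in>X. a = b)"
  shows "Psad l F v xp - Psad l F yp u \<le> (\<mu> * kk + 2 * L) / 4 * (norm (u - x))\<^sup>2
           - (\<mu> * (kk + 2) + 2 * L) / 4 * (norm (u - xp))\<^sup>2
           + 1 / (2 * s) * ((norm (v - y))\<^sup>2 - (norm (v - yp))\<^sup>2)
           + (2 * lam * (diameter Y)\<^sup>2 + 2 * (norm (g - gl x))\<^sup>2) / (\<mu> * (kk + 2))
           + (g - gl x) \<bullet> (u - x)"
proof -
  have ypY: "yp \<in> Y" using yp closest_point_in_set[OF Y(4) Y(1)] by simp
  have xpX: "xp \<in> X" using xp closest_point_in_set[OF X(3) X(1)] by simp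
  define B where "B = (norm (v - y))\<^sup>2"
  define B' where "B' = (norm (v - yp))\<^sup>2"
  have ystep: "(v - yp) \<bullet> (F *v x) \<le> 1 / (2 * s) * (B - B')"
  proof -
    have "(y + s *\<^sub>R (F *v x) - yp) \<bullet> (v - yp) \<le> 0"
      using closest_point_dot[OF Y(2) Y(4) v, of "y + s *\<^sub>R (F *v x)"] yp by simp
    then have "s * ((v - yp) \<bullet> (F *v x)) \<le> (yp - y) \<bullet> (v - yp)"
      by (simp add: inner_add_left inner_diff_left inner_commute algebra_simps)
    also have "\<dots> = (B - B' - (norm (yp - y))\<^sup>2) / 2"
      using norm_sq_diff3[of v y yp] unfolding B_def B'_def by (simp add: inner_commute)
    also have "\<dots> \<le> (B - B') / 2" by simp
    finally have "s * ((v - yp) \<bullet> (F *v x)) \<le> (B - B') / 2" .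
    then show ?thesis using s by (simp add: field_simps mult.commute)
  qed
  define \<delta> where "\<delta> = g - gl x"
  have extra: "0 \<le> (2 * lam * (diameter Y)\<^sup>2 + 2 * (norm \<delta>)\<^sup>2) / (\<mu> * (kk + 2))"
    using lam mu kk by (intro divide_nonneg_pos) auto
  from beta show ?thesis
  proof
    assume "\<forall>a\<in>X. \<forall>b\<in>X. a = b"
    then have e1: "xp = x" "u = x" using xpX u x by auto
    have "Psad l F v xp - Psad l F yp u = (v - yp) \<bullet> (F *v x)"
      unfolding Psad_def e1 by (simp add: inner_diff_left)
    then show ?thesis using ystep extra unfolding e1 B_def B'_def \<delta>_def by simp
  next
    assume b: "\<beta> > 0 \<and> 1 / (2 * \<beta>) = \<mu> * (kk + 2) / 4 + L / 2"
    define m where "m = \<mu> * (kk + 2) / 4"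
    have m0: "m > 0" using mu kk by (simp add: m_def)
    define A where "A = (norm (u - x))\<^sup>2"
    define A' where "A' = (norm (u - xp))\<^sup>2"
    define dd where "dd = xp - x"
    define nd where "nd = norm dd"
    define q where "q = g + transpose F *v yp"
    have x1: "q \<bullet> (xp - u) \<le> 1 / (2 * \<beta>) * (A - A' - nd\<^sup>2)"
    proof -
      have "(x - \<beta> *\<^sub>R q - xp) \<bullet> (u - xp) \<le> 0"
        using closest_point_dot[OF X(2) X(3) u, of "x - \<beta> *\<^sub>R q"] xp q_def by simp
      then have "\<beta> * (q \<bullet> (xp - u)) \<le> (x - xp) \<bullet> (xp - u)"
        by (simp add: inner_diff_left inner_diff_right inner_commute algebra_simps)
      also have "\<dots> = (A - A' - nd\<^sup>2) / 2"
        using norm_sq_diff3[of u x xp] unfolding A_def A'_def nd_def dd_def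
        by (simp add: inner_commute norm_minus_commute inner_diff_left inner_diff_right algebra_simps)
      finally have "\<beta> * (q \<bullet> (xp - u)) \<le> (A - A' - nd\<^sup>2) / 2" .
      then show ?thesis using b by (simp add: field_simps mult.commute)
    qed
    have x2: "l xp \<le> l x + gl x \<bullet> dd + L / 2 * nd\<^sup>2" using desc[OF x xpX] by (simp add: dd_def nd_def)
    have x3: "l u \<ge> l x + (u - x) \<bullet> gl x + \<mu> / 2 * A" using strong[OF x u] by (simp add: A_def)
    have x4: "(transpose F *v yp) \<bullet> (xp - u) = yp \<bullet> (F *v xp) - yp \<bullet> (F *v u)"
      by (simp add: dot_lmul_matrix matrix_vector_mult_diff_distrib inner_diff_right)
    have DY: "norm (v - yp) \<le> diameter Y" using diameter_bounded_bound[OF Y(3) v ypY] by (simp add: dist_norm)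
    have Fdd: "norm (F *v dd) \<le> sqrt lam * nd"
    proof -
      have "(norm (F *v dd))\<^sup>2 \<le> lam * nd\<^sup>2" using lam(2)[of dd] by (simp add: nd_def)
      also have "lam * nd\<^sup>2 = (sqrt lam * nd)\<^sup>2" using lam(1) by (simp add: power_mult_distrib)
      finally have "(norm (F *v dd))\<^sup>2 \<le> (sqrt lam * nd)\<^sup>2" .
      moreover have "0 \<le> sqrt lam * nd" using lam(1) unfolding nd_def by simp
      ultimately show ?thesis by (rule power2_le_imp_le)
    qed
    have x5: "(v - yp) \<bullet> (F *v dd) \<le> diameter Y * sqrt lam * nd"
    proof -
      have "(v - yp) \<bullet> (F *v dd) \<le> norm (v - yp) * norm (F *v dd)" by (rule norm_cauchy_schwarz)
      also have "\<dots> \<le> diameter Y * (sqrt lam * nd)"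
        using DY Fdd order_trans[OF norm_ge_zero DY] by (intro mult_mono) auto
      finally show ?thesis by simp
    qed
    have x6: "- (\<delta> \<bullet> dd) \<le> norm \<delta> * nd"
      using norm_cauchy_schwarz[of "-\<delta>" dd] by (simp add: nd_def)
    have xpdd: "xp = x + dd" by (simp add: dd_def)
    have id1: "Psad l F v xp - Psad l F yp u = l xp - l u + v \<bullet> (F *v x) + v \<bullet> (F *v dd) - yp \<bullet> (F *v u)"
      unfolding Psad_def xpdd by (simp add: matrix_vector_right_distrib inner_add_right)
    have id2: "q \<bullet> (xp - u) = gl x \<bullet> (xp - u) + \<delta> \<bullet> dd - \<delta> \<bullet> (u - x) + yp \<bullet> (F *v x) + yp \<bullet> (F *v dd) - yp \<bullet> (F *v u)"
      unfolding q_def inner_add_left x4 \<delta>_def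
      by (simp add: xpdd matrix_vector_right_distrib inner_add_right inner_diff_left inner_diff_right algebra_simps)
    have id3: "gl x \<bullet> (xp - u) = gl x \<bullet> dd - (u - x) \<bullet> gl x"
      by (simp add: xpdd inner_diff_right inner_add_right inner_commute)
    have id4: "v \<bullet> (F *v x) - yp \<bullet> (F *v x) = (v - yp) \<bullet> (F *v x)" "v \<bullet> (F *v dd) - yp \<bullet> (F *v dd) = (v - yp) \<bullet> (F *v dd)"
      by (simp_all add: inner_diff_left)
    define c where "c = diameter Y * sqrt lam + norm \<delta>"
    have key: "Psad l F v xp - Psad l F yp u \<le> 1 / (2 * \<beta>) * (A - A' - nd\<^sup>2) + L / 2 * nd\<^sup>2 - \<mu> / 2 * A
        + 1 / (2 * s) * (B - B') + c * nd + \<delta> \<bullet> (u - x)"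
    proof -
      have "c * nd = diameter Y * sqrt lam * nd + norm \<delta> * nd" by (simp add: c_def algebra_simps)
      then show ?thesis using id1 id2 id3 id4 x1 x2 x3 x5 x6 ystep by linarith
    qed
    have e2: "1 / (2 * \<beta>) * (A - A' - nd\<^sup>2) + L / 2 * nd\<^sup>2 - \<mu> / 2 * A
        = (\<mu> * kk + 2 * L) / 4 * A - (\<mu> * (kk + 2) + 2 * L) / 4 * A' - m * nd\<^sup>2"
    proof -
      have "1 / (2 * \<beta>) * (A - A' - nd\<^sup>2) = (m + L / 2) * (A - A' - nd\<^sup>2)" using b by (simp add: m_def)
      also have "\<dots> + L / 2 * nd\<^sup>2 - \<mu> / 2 * A = (\<mu> * kk + 2 * L) / 4 * A - (\<mu> * (kk + 2) + 2 * L) / 4 * A' - m * nd\<^sup>2"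
        unfolding m_def by (simp add: field_simps)
      finally show ?thesis .
    qed
    have q1: "c * nd - m * nd\<^sup>2 \<le> c\<^sup>2 / (\<mu> * (kk + 2))"
      using quad_bound[OF m0, of c nd] by (simp add: m_def)
    have c2: "c\<^sup>2 \<le> 2 * lam * (diameter Y)\<^sup>2 + 2 * (norm \<delta>)\<^sup>2"
    proof -
      have "c\<^sup>2 \<le> 2 * (diameter Y * sqrt lam)\<^sup>2 + 2 * (norm \<delta>)\<^sup>2"
        unfolding c_def using sum_squares_bound[of "diameter Y * sqrt lam" "norm \<delta>"]
        by (simp add: power2_eq_square algebra_simps)
      also have "(diameter Y * sqrt lam)\<^sup>2 = lam * (diameter Y)\<^sup>2" using lam by (simp add: power_mult_distrib)
      finally show ?thesis by simp
    qed
    have q2: "c\<^sup>2 / (\<mu> * (kk + 2)) \<le> (2 * lam * (diameter Y)\<^sup>2 + 2 * (norm \<delta>)\<^sup>2) / (\<mu> * (kk + 2))"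
      using c2 mu kk by (intro divide_right_mono) auto
    show ?thesis using key e2 q1 q2 unfolding A_def A'_def B_def B'_def \<delta>_def by linarith
  qed
qed



lemma sum_kp1: "(\<Sum>k\<le>t. real k + 1) = (real t + 1) * (real t + 2) / 2"
  by (induction t) (simp_all add: field_simps)

lemma tele_x:
  fixes A :: "nat \<Rightarrow> real"
  shows "(\<Sum>k\<le>t. (real k + 1) * ((\<mu> * real k + 2 * L) / 4 * A k - (\<mu> * (real k + 2) + 2 * L) / 4 * A (Suc k)))
       = L / 2 * (\<Sum>k\<le>t. A k) - (real t + 1) * ((\<mu> * (real t + 2) + 2 * L) / 4) * A (Suc t)"
proof (induction t)
  case 0 then show ?case by (simp add: field_simps)
next
  case (Suc t)
  show ?case unfolding sum.atMost_Suc Suc by (simp add: field_simps)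
qed

lemma tele_y:
  fixes B :: "nat \<Rightarrow> real"
  shows "(\<Sum>k\<le>t. (real k + 1) * (B k - B (Suc k))) = (\<Sum>k\<le>t. B k) - (real t + 1) * B (Suc t)"
  by (induction t) (simp_all add: field_simps)

lemma spdhg_in:
  fixes Y :: "(real^'l) set" and F :: "real^'d^'l" and X :: "(real^'d) set"
  assumes X: "X \<noteq> {}" "closed X" and Y: "Y \<noteq> {}" "convex Y" "compact Y" and s: "s > 0"
    and x0: "x0 \<in> X" and y0: "y0 \<in> Y"
  shows "fst (spdhg l G F X Y s beta y0 x0 w k) \<in> Y \<and> snd (spdhg l G F X Y s beta y0 x0 w k) \<in> X"
proof (cases k)
  case 0 then show ?thesis using x0 y0 by simp
next
  case (Suc j)
  have cY: "closed Y" using Y compact_imp_closed by auto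
  show ?thesis unfolding Suc spdhg_Suc'[OF Y s]
    using closest_point_in_set[OF cY Y(1)] closest_point_in_set[OF X(2) X(1)] by (simp add: Let_def)
qed



lemma aux_div: "(a::real) \<noteq> 0 \<Longrightarrow> b \<noteq> 0 \<Longrightarrow> 2 / a * D / (2 * b) = D / (b * a)"
  by (simp add: field_simps)

lemma pointwise:
  fixes X :: "(real^'d) set" and Y :: "(real^'l) set" and F :: "real^'d^'l"
    and l :: "real^'d \<Rightarrow> real" and gl :: "real^'d \<Rightarrow> real^'d"
    and G :: "real^'d \<Rightarrow> 'e \<Rightarrow> real^'d" and w :: "nat \<Rightarrow> 'e"
  assumes X: "X \<noteq> {}" "convex X" "compact X"
    and Y: "Y \<noteq> {}" "convex Y" "compact Y"
    and l_convex: "convex_on X l"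
    and l_deriv: "\<And>x. x \<in> X \<Longrightarrow> (l has_derivative (\<lambda>h. gl x \<bullet> h)) (at x within X)"
    and gl_lip: "\<And>x1 x2. x1 \<in> X \<Longrightarrow> x2 \<in> X \<Longrightarrow> norm (gl x1 - gl x2) \<le> L * norm (x1 - x2)"
    and mu_pos: "\<mu> > 0"
    and strong: "\<And>x y. x \<in> X \<Longrightarrow> y \<in> X \<Longrightarrow> l y - l x - (y - x) \<bullet> gl x \<ge> \<mu> / 2 * (norm (y - x))\<^sup>2"
    and s_pos: "s > 0" and x0: "x0 \<in> X" and y0: "y0 \<in> Y"
    and saddle: "ystar \<in> Y" "xstar \<in> X"
    and lam: "lam \<ge> 0" "\<And>d. (norm (F *v d))\<^sup>2 \<le> lam * (norm d)\<^sup>2"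
    and beta_def: "beta = (\<lambda>j::nat. 2 / (\<mu> * (real j + 1) + 2 * L))"
    and alpha_def: "alpha = (\<lambda>j::nat. 2 * real j / ((real t + 1) * (real t + 2)))"
  shows "Psad l F ystar (xbar l G F X Y s beta y0 x0 alpha w t) - Psad l F (ybar l G F X Y s beta y0 x0 alpha w t) xstar
     \<le> (diameter Y)\<^sup>2 / (s * (real t + 2)) + L * (diameter X)\<^sup>2 / (real t + 2)
       + (\<Sum>k\<le>t. alpha (Suc k) * ((2 * lam * (diameter Y)\<^sup>2
            + 2 * (norm (G (snd (spdhg l G F X Y s beta y0 x0 w k)) (w k) - gl (snd (spdhg l G F X Y s beta y0 x0 w k))))\<^sup>2) / (\<mu> * (real k + 2))
          + (G (snd (spdhg l G F X Y s beta y0 x0 w k)) (w k) - gl (snd (spdhg l G F X Y s beta y0 x0 w k))) \<bullet> (xstar - snd (spdhg l G F X Y s beta y0 x0 w k))))"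
proof -
  define xk where "xk = (\<lambda>k. snd (spdhg l G F X Y s beta y0 x0 w k))"
  define yk where "yk = (\<lambda>k. fst (spdhg l G F X Y s beta y0 x0 w k))"
  define \<delta> where "\<delta> = (\<lambda>k. G (xk k) (w k) - gl (xk k))"
  define R where "R = (\<lambda>k. (2 * lam * (diameter Y)\<^sup>2 + 2 * (norm (\<delta> k))\<^sup>2) / (\<mu> * (real k + 2)) + \<delta> k \<bullet> (xstar - xk k))"
  define A where "A = (\<lambda>k. (norm (xstar - xk k))\<^sup>2)"
  define B where "B = (\<lambda>k. (norm (ystar - yk k))\<^sup>2)"
  define \<Phi> where "\<Phi> = (\<lambda>k. Psad l F ystar (xk (Suc k)) - Psad l F (yk (Suc k)) xstar)"
  define c0 where "c0 = 2 / ((real t + 1) * (real t + 2))"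
  have al: "alpha (Suc k) = c0 * (real k + 1)" for k unfolding alpha_def c0_def by simp
  have c0p: "c0 > 0" unfolding c0_def by simp
  have cX: "closed X" using X compact_imp_closed by auto
  have cY: "closed Y" using Y compact_imp_closed by auto
  have bY: "bounded Y" using Y compact_imp_bounded by auto
  have bX: "bounded X" using X compact_imp_bounded by auto
  have inX: "xk k \<in> X" for k
    using spdhg_in[OF X(1) cX Y s_pos x0 y0] unfolding xk_def by blast
  have inY: "yk k \<in> Y" for k
    using spdhg_in[OF X(1) cX Y s_pos x0 y0] unfolding yk_def by blast
  note inXY = inX inY
  have desc: "\<And>x y. x \<in> X \<Longrightarrow> y \<in> X \<Longrightarrow> l y \<le> l x + gl x \<bullet> (y - x) + L / 2 * (norm (y - x))\<^sup>2"
    using descent[OF X(2) _ _ l_deriv gl_lip] by blast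
  have single: "X = {xstar}" if "\<not> L \<ge> 0"
  proof -
    have "a = b" if "a \<in> X" "b \<in> X" for a b
    proof (rule ccontr)
      assume "a \<noteq> b"
      then have "norm (a - b) > 0" by simp
      moreover have "0 \<le> L * norm (a - b)" using gl_lip[OF that] norm_ge_zero order_trans by blast
      ultimately show False using \<open>\<not> L \<ge> 0\<close> by (simp add: zero_le_mult_iff)
    qed
    then show ?thesis using saddle(2) by blast
  qed
  have bcond: "(beta (Suc k) > 0 \<and> 1 / (2 * beta (Suc k)) = \<mu> * (real k + 2) / 4 + L / 2) \<or> (\<forall>a\<in>X. \<forall>b\<in>X. a = b)" for k
  proof (cases "L \<ge> 0")
    case True
    have pos: "\<mu> * (real k + 2) + 2 * L > 0" using mu_pos True by (simp add: add_pos_nonneg)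
    have "beta (Suc k) = 2 / (\<mu> * (real k + 2) + 2 * L)" unfolding beta_def by (simp add: algebra_simps)
    then have b1: "beta (Suc k) > 0" using pos by simp
    have b2: "1 / (2 * beta (Suc k)) = (\<mu> * (real k + 2) + 2 * L) / 4"
      using \<open>beta (Suc k) = _\<close> pos by simp
    have "(\<mu> * (real k + 2) + 2 * L) / 4 = \<mu> * (real k + 2) / 4 + L / 2" by simp
    then show ?thesis using b1 b2 by simp
  next
    case False then show ?thesis using single by auto
  qed
  have step: "\<Phi> k \<le> (\<mu> * real k + 2 * L) / 4 * A k - (\<mu> * (real k + 2) + 2 * L) / 4 * A (Suc k)
      + 1 / (2 * s) * (B k - B (Suc k)) + R k" for k
  proof -
    have sp: "spdhg l G F X Y s beta y0 x0 w (Suc k) = (closest_point Y (yk k + s *\<^sub>R (F *v xk k)),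
       closest_point X (xk k - beta (Suc k) *\<^sub>R (G (xk k) (w k) + transpose F *v closest_point Y (yk k + s *\<^sub>R (F *v xk k)))))"
      unfolding spdhg_Suc'[OF Y s_pos] xk_def yk_def by (simp add: Let_def)
    have e1: "yk (Suc k) = closest_point Y (yk k + s *\<^sub>R (F *v xk k))" using sp unfolding yk_def by simp
    have e2: "xk (Suc k) = closest_point X (xk k - beta (Suc k) *\<^sub>R (G (xk k) (w k) + transpose F *v yk (Suc k)))"
      using sp e1 unfolding xk_def by simp
    show ?thesis
      using step_ineq[OF X(1,2) cX Y(1,2) bY cY strong desc s_pos mu_pos _ saddle(2) saddle(1) inXY(1) e1 e2 lam bcond[of k]]
      unfolding \<Phi>_def A_def B_def R_def \<delta>_def by simp
  qed
  have sa: "(\<Sum>k\<le>t. alpha (Suc k)) = 1"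
    unfolding al sum_distrib_left[symmetric] sum_kp1 c0_def by simp
  have anon: "alpha (Suc k) \<ge> 0" for k unfolding al using c0p by simp
  have Fsum: "F *v (\<Sum>k\<le>t. a k *\<^sub>R z k) = (\<Sum>k\<le>t. a k *\<^sub>R (F *v z k))" for a z
    by (induction t) (simp_all add: matrix_vector_right_distrib matrix_vector_mult_scaleR)
  have jen: "Psad l F ystar (xbar l G F X Y s beta y0 x0 alpha w t) - Psad l F (ybar l G F X Y s beta y0 x0 alpha w t) xstar
      \<le> (\<Sum>k\<le>t. alpha (Suc k) * \<Phi> k)"
  proof -
    have xb: "xbar l G F X Y s beta y0 x0 alpha w t = (\<Sum>k\<le>t. alpha (Suc k) *\<^sub>R xk (Suc k))"
      unfolding xbar_def xk_def ..
    have yb: "ybar l G F X Y s beta y0 x0 alpha w t = (\<Sum>k\<le>t. alpha (Suc k) *\<^sub>R yk (Suc k))"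
      unfolding ybar_def yk_def ..
    have l1: "l (\<Sum>k\<le>t. alpha (Suc k) *\<^sub>R xk (Suc k)) \<le> (\<Sum>k\<le>t. alpha (Suc k) * l (xk (Suc k)))"
      using convex_on_sum[OF _ _ l_convex sa anon inXY(1)] by simp
    have i1: "ystar \<bullet> (F *v (\<Sum>k\<le>t. alpha (Suc k) *\<^sub>R xk (Suc k))) = (\<Sum>k\<le>t. alpha (Suc k) * (ystar \<bullet> (F *v xk (Suc k))))"
      unfolding Fsum by (simp add: inner_sum_right)
    have i2: "(\<Sum>k\<le>t. alpha (Suc k) *\<^sub>R yk (Suc k)) \<bullet> (F *v xstar) = (\<Sum>k\<le>t. alpha (Suc k) * (yk (Suc k) \<bullet> (F *v xstar)))"
      by (simp add: inner_sum_left)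
    have i3: "l xstar = (\<Sum>k\<le>t. alpha (Suc k) * l xstar)" using sa by (simp add: sum_distrib_right[symmetric])
    have "(\<Sum>k\<le>t. alpha (Suc k) * \<Phi> k) = (\<Sum>k\<le>t. alpha (Suc k) * l (xk (Suc k))) + (\<Sum>k\<le>t. alpha (Suc k) * (ystar \<bullet> (F *v xk (Suc k))))
       - (\<Sum>k\<le>t. alpha (Suc k) * l xstar) - (\<Sum>k\<le>t. alpha (Suc k) * (yk (Suc k) \<bullet> (F *v xstar)))"
      unfolding \<Phi>_def Psad_def by (simp add: sum_subtractf[symmetric] sum.distrib[symmetric] algebra_simps)
    then show ?thesis unfolding xb yb Psad_def using l1 i1 i2 i3 by linarith
  qed
  have sumstep: "(\<Sum>k\<le>t. alpha (Suc k) * \<Phi> k) \<le> c0 * (\<Sum>k\<le>t. (real k + 1) * ((\<mu> * real k + 2 * L) / 4 * A k - (\<mu> * (real k + 2) + 2 * L) / 4 * A (Suc k)))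
      + c0 / (2 * s) * (\<Sum>k\<le>t. (real k + 1) * (B k - B (Suc k))) + (\<Sum>k\<le>t. alpha (Suc k) * R k)"
  proof -
    have "(\<Sum>k\<le>t. alpha (Suc k) * \<Phi> k) \<le> (\<Sum>k\<le>t. alpha (Suc k) * ((\<mu> * real k + 2 * L) / 4 * A k - (\<mu> * (real k + 2) + 2 * L) / 4 * A (Suc k)
      + 1 / (2 * s) * (B k - B (Suc k)) + R k))"
      using step anon by (intro sum_mono mult_left_mono) auto
    also have "\<dots> = c0 * (\<Sum>k\<le>t. (real k + 1) * ((\<mu> * real k + 2 * L) / 4 * A k - (\<mu> * (real k + 2) + 2 * L) / 4 * A (Suc k)))
      + c0 / (2 * s) * (\<Sum>k\<le>t. (real k + 1) * (B k - B (Suc k))) + (\<Sum>k\<le>t. alpha (Suc k) * R k)"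
      unfolding sum_distrib_left sum.distrib[symmetric] by (intro sum.cong refl) (use s_pos in \<open>simp add: al field_simps\<close>)
    finally show ?thesis .
  qed
  have Abound: "L / 2 * (\<Sum>k\<le>t. A k) - (real t + 1) * ((\<mu> * (real t + 2) + 2 * L) / 4) * A (Suc t)
      \<le> (real t + 1) * (L / 2 * (diameter X)\<^sup>2)"
  proof (cases "L \<ge> 0")
    case True
    have Ale: "A k \<le> (diameter X)\<^sup>2" for k
      unfolding A_def using diameter_bounded_bound[OF bX saddle(2) inXY(1)] by (simp add: dist_norm power_mono)
    have "(\<Sum>k\<le>t. A k) \<le> (real t + 1) * (diameter X)\<^sup>2"
      using sum_bounded_above[of "{..t}" A "(diameter X)\<^sup>2"] Ale by (simp add: add.commute)
    then have "L / 2 * (\<Sum>k\<le>t. A k) \<le> (real t + 1) * (L / 2 * (diameter X)\<^sup>2)"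
      using True by (simp add: mult_left_mono mult.left_commute)
    moreover have "0 \<le> (real t + 1) * ((\<mu> * (real t + 2) + 2 * L) / 4) * A (Suc t)"
      using True mu_pos unfolding A_def by simp
    ultimately show ?thesis by linarith
  next
    case False
    then have "X = {xstar}" by (rule single)
    then have "A k = 0" for k using inXY(1)[of k] unfolding A_def by simp
    then show ?thesis using \<open>X = {xstar}\<close> by simp
  qed
  have Bbound: "(\<Sum>k\<le>t. B k) - (real t + 1) * B (Suc t) \<le> (real t + 1) * (diameter Y)\<^sup>2"
  proof -
    have Ble: "B k \<le> (diameter Y)\<^sup>2" for k
      unfolding B_def using diameter_bounded_bound[OF bY saddle(1) inXY(2)] by (simp add: dist_norm power_mono)
    have "(\<Sum>k\<le>t. B k) \<le> (real t + 1) * (diameter Y)\<^sup>2"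
      using sum_bounded_above[of "{..t}" B "(diameter Y)\<^sup>2"] Ble by (simp add: add.commute)
    moreover have "0 \<le> (real t + 1) * B (Suc t)" unfolding B_def by simp
    ultimately show ?thesis by linarith
  qed
  have ne1: "real t + 1 \<noteq> 0" and ne2: "real t + 2 \<noteq> 0" by simp_all
  have cc: "c0 * (real t + 1) = 2 / (real t + 2)"
  proof -
    have p: "(real t + 1) * (real t + 2) \<noteq> 0" using ne1 ne2 by simp
    have "c0 * ((real t + 1) * (real t + 2)) = 2" unfolding c0_def using p by simp
    then show ?thesis using ne2 by (simp add: eq_divide_eq mult.assoc)
  qed
  have fin1: "c0 * ((real t + 1) * (L / 2 * (diameter X)\<^sup>2)) = L * (diameter X)\<^sup>2 / (real t + 2)"
  proof -
    have "c0 * ((real t + 1) * (L / 2 * (diameter X)\<^sup>2)) = (c0 * (real t + 1)) * (L / 2 * (diameter X)\<^sup>2)"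
      by (simp only: mult.assoc)
    also have "\<dots> = 2 / (real t + 2) * (L / 2 * (diameter X)\<^sup>2)" by (simp only: cc)
    also have "\<dots> = (2 * (L / 2 * (diameter X)\<^sup>2)) / (real t + 2)" by (rule times_divide_eq_left)
    also have "2 * (L / 2 * (diameter X)\<^sup>2) = L * (diameter X)\<^sup>2" by simp
    finally show ?thesis .
  qed
  have fin2: "c0 / (2 * s) * ((real t + 1) * (diameter Y)\<^sup>2) = (diameter Y)\<^sup>2 / (s * (real t + 2))"
  proof -
    have "c0 / (2 * s) * ((real t + 1) * (diameter Y)\<^sup>2) = (c0 * (real t + 1)) * (diameter Y)\<^sup>2 / (2 * s)"
      by (simp add: mult.assoc)
    also have "\<dots> = 2 / (real t + 2) * (diameter Y)\<^sup>2 / (2 * s)" by (simp only: cc)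
    also have "\<dots> = (diameter Y)\<^sup>2 / (s * (real t + 2))" using ne2 s_pos by (intro aux_div) auto
    finally show ?thesis .
  qed
  have "c0 * (L / 2 * (\<Sum>k\<le>t. A k) - (real t + 1) * ((\<mu> * (real t + 2) + 2 * L) / 4) * A (Suc t))
      \<le> c0 * ((real t + 1) * (L / 2 * (diameter X)\<^sup>2))"
    using Abound c0p by (intro mult_left_mono) auto
  moreover have "c0 / (2 * s) * ((\<Sum>k\<le>t. B k) - (real t + 1) * B (Suc t)) \<le> c0 / (2 * s) * ((real t + 1) * (diameter Y)\<^sup>2)"
    using Bbound c0p s_pos by (intro mult_left_mono) auto
  ultimately have "(\<Sum>k\<le>t. alpha (Suc k) * \<Phi> k) \<le> (diameter Y)\<^sup>2 / (s * (real t + 2)) + L * (diameter X)\<^sup>2 / (real t + 2)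
      + (\<Sum>k\<le>t. alpha (Suc k) * R k)"
    using sumstep unfolding tele_x tele_y fin1 fin2 by linarith
  then show ?thesis using jen unfolding R_def \<delta>_def xk_def by simp
qed



lemma meas_iter:
  fixes Y :: "(real^'l) set" and F :: "real^'d^'l" and X :: "(real^'d) set"
    and G :: "real^'d \<Rightarrow> 'e \<Rightarrow> real^'d" and M :: "'e measure"
  assumes X: "X \<noteq> {}" "convex X" "closed X" and Y: "Y \<noteq> {}" "convex Y" "compact Y" and s: "s > 0"
    and G_meas: "(\<lambda>p. G (fst p) (snd p)) \<in> borel_measurable (borel \<Otimes>\<^sub>M M)"
  shows "j \<le> k \<Longrightarrow> (\<lambda>r. fst (spdhg l G F X Y s beta y0 x0 r j)) \<in> borel_measurable (PiM {..<k} (\<lambda>_. M))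
      \<and> (\<lambda>r. snd (spdhg l G F X Y s beta y0 x0 r j)) \<in> borel_measurable (PiM {..<k} (\<lambda>_. M))"
proof (induction j)
  case 0 then show ?case by simp
next
  case (Suc j)
  have cY: "closed Y" using Y compact_imp_closed by auto
  have [measurable]: "closest_point Y \<in> borel_measurable borel"
    by (intro borel_measurable_continuous_onI continuous_on_closest_point Y(1,2) cY)
  have [measurable]: "closest_point X \<in> borel_measurable borel"
    by (intro borel_measurable_continuous_onI continuous_on_closest_point X)
  have [measurable]: "(\<lambda>x. F *v x) \<in> borel_measurable borel"
    by (intro borel_measurable_continuous_onI matrix_vector_mult_linear_continuous_on)
  have [measurable]: "(\<lambda>x. transpose F *v x) \<in> borel_measurable borel"
    by (intro borel_measurable_continuous_onI matrix_vector_mult_linear_continuous_on)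
  define P where "P = PiM {..<k} (\<lambda>_. M)"
  from Suc have jk: "j < k" by simp
  from Suc.IH jk have IH1[measurable]: "(\<lambda>r. fst (spdhg l G F X Y s beta y0 x0 r j)) \<in> borel_measurable P"
    and IH2[measurable]: "(\<lambda>r. snd (spdhg l G F X Y s beta y0 x0 r j)) \<in> borel_measurable P"
    unfolding P_def by auto
  have rj: "(\<lambda>r. r j) \<in> measurable P M" unfolding P_def using jk by (intro measurable_component_singleton) auto
  have Gm[measurable]: "(\<lambda>r. G (snd (spdhg l G F X Y s beta y0 x0 r j)) (r j)) \<in> borel_measurable P"
    using measurable_compose[OF measurable_Pair[OF IH2 rj] G_meas] by simp
  have e: "spdhg l G F X Y s beta y0 x0 r (Suc j) =
     (closest_point Y (fst (spdhg l G F X Y s beta y0 x0 r j) + s *\<^sub>R (F *v snd (spdhg l G F X Y s beta y0 x0 r j))),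
      closest_point X (snd (spdhg l G F X Y s beta y0 x0 r j) - beta (Suc j) *\<^sub>R (G (snd (spdhg l G F X Y s beta y0 x0 r j)) (r j)
        + transpose F *v closest_point Y (fst (spdhg l G F X Y s beta y0 x0 r j) + s *\<^sub>R (F *v snd (spdhg l G F X Y s beta y0 x0 r j))))))" for r
    unfolding spdhg_Suc'[OF Y s] by (simp add: Let_def)
  show ?case unfolding e fst_conv snd_conv P_def[symmetric] by (intro conjI; measurable)
qed



lemma le_one_plus_sq: "(a::real) \<le> 1 + a\<^sup>2"
proof (cases "a \<le> 1")
  case True then show ?thesis by (smt (verit) zero_le_power2)
next
  case False then have "a \<le> a * a" by (simp add: mult_le_cancel_left1)
  then show ?thesis by (simp add: power2_eq_square)
qed

lemma expect_step:
  fixes X :: "(real^'d) set" and Y :: "(real^'l) set" and F :: "real^'d^'l"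
    and gl :: "real^'d \<Rightarrow> real^'d"
    and M :: "'e measure" and G :: "real^'d \<Rightarrow> 'e \<Rightarrow> real^'d"
    and N :: "'w measure" and \<xi> :: "nat \<Rightarrow> 'w \<Rightarrow> 'e" and k :: nat and beta :: "nat \<Rightarrow> real" and l :: "real^'d \<Rightarrow> real"
  assumes X: "X \<noteq> {}" "convex X" "compact X"
    and Y: "Y \<noteq> {}" "convex Y" "compact Y"
    and gl_cont: "continuous_on X gl"
    and M_prob: "prob_space M"
    and G_meas: "(\<lambda>p. G (fst p) (snd p)) \<in> borel_measurable (borel \<Otimes>\<^sub>M M)"
    and G_unbiased: "\<And>x. x \<in> X \<Longrightarrow> integrable M (G x) \<and> (\<integral>e. G x e \<partial>M) = gl x"
    and G_var: "\<And>x. x \<in> X \<Longrightarrow> (\<integral>\<^sup>+e. ennreal ((norm (G x e - gl x))\<^sup>2) \<partial>M) \<le> ennreal (\<sigma>\<^sup>2)"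
    and N_prob: "prob_space N"
    and xi_meas: "\<And>k. \<xi> k \<in> measurable N M"
    and xi_distr: "\<And>k. distr N M (\<xi> k) = M"
    and xi_indep: "prob_space.indep_vars N (\<lambda>_. M) \<xi> UNIV"
    and s_pos: "s > 0"
    and x0: "x0 \<in> X" and y0: "y0 \<in> Y" and xs: "xstar \<in> X"
  defines "Z \<equiv> (\<lambda>w. snd (spdhg l G F X Y s beta y0 x0 (\<lambda>i. \<xi> i w) k))"
  shows "integrable N (\<lambda>w. (norm (G (Z w) (\<xi> k w) - gl (Z w)))\<^sup>2)
     \<and> (\<integral>w. (norm (G (Z w) (\<xi> k w) - gl (Z w)))\<^sup>2 \<partial>N) \<le> \<sigma>\<^sup>2
     \<and> integrable N (\<lambda>w. (G (Z w) (\<xi> k w) - gl (Z w)) \<bullet> (xstar - Z w))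
     \<and> (\<integral>w. (G (Z w) (\<xi> k w) - gl (Z w)) \<bullet> (xstar - Z w) \<partial>N) = 0"
proof -
  interpret N: prob_space N by (rule N_prob)
  interpret M: prob_space M by (rule M_prob)
  have cX: "closed X" using X compact_imp_closed by auto
  have cY: "closed Y" using Y compact_imp_closed by auto
  define P where "P = PiM {..<k} (\<lambda>_::nat. M)"
  define h where "h = (\<lambda>r. snd (spdhg l G F X Y s beta y0 x0 r k))"
  have hm: "h \<in> borel_measurable P"
    using meas_iter[OF X(1,2) cX Y s_pos G_meas, of k k] unfolding h_def P_def by simp
  define rs where "rs = (\<lambda>w. restrict (\<lambda>i. \<xi> i w) {..<k})"
  have rsm: "rs \<in> measurable N P" unfolding rs_def P_def
    using xi_meas by (intro measurable_restrict) auto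
  have Zeq: "Z = (\<lambda>w. h (rs w))"
  proof
    fix w show "Z w = h (rs w)" unfolding Z_def h_def rs_def
      by (intro arg_cong[where f=snd] spdhg_dep) auto
  qed
  have Zm[measurable]: "Z \<in> borel_measurable N" unfolding Zeq using measurable_compose[OF rsm hm] .
  have ZX: "Z w \<in> X" for w using spdhg_in[OF X(1) cX Y s_pos x0 y0] unfolding Z_def by blast
  define PK where "PK = PiM {k} (\<lambda>_::nat. M)"
  define rk where "rk = (\<lambda>w. restrict (\<lambda>i. \<xi> i w) {k})"
  have rkm: "rk \<in> measurable N PK" unfolding rk_def PK_def
    using xi_meas by (intro measurable_restrict) auto
  have ind0: "N.indep_var P rs PK rk"
    unfolding P_def rs_def PK_def rk_def using N.indep_var_restrict[OF xi_indep, of "{..<k}" "{k}"] by simp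
  define PR where "PR = distr N P rs"
  define Q where "Q = distr N PK rk"
  have dist: "PR \<Otimes>\<^sub>M Q = distr N (P \<Otimes>\<^sub>M PK) (\<lambda>w. (rs w, rk w))"
    using ind0 unfolding N.indep_var_distribution_eq PR_def Q_def by simp
  interpret PR: prob_space PR unfolding PR_def by (rule N.prob_space_distr[OF rsm])
  interpret Q: prob_space Q unfolding Q_def by (rule N.prob_space_distr[OF rkm])
  interpret PP: pair_prob_space PR Q by unfold_locales
  have compk: "(\<lambda>b. b k) \<in> measurable PK M" unfolding PK_def by (rule measurable_component_singleton) simp
  have Qk: "distr Q M (\<lambda>b. b k) = M"
  proof -
    have "distr Q M (\<lambda>b. b k) = distr N M ((\<lambda>b. b k) \<circ> rk)" unfolding Q_def by (rule distr_distr[OF compk rkm])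
    also have "(\<lambda>b. b k) \<circ> rk = \<xi> k" unfolding rk_def by auto
    finally show ?thesis using xi_distr by simp
  qed
  have pairm: "(\<lambda>w. (rs w, rk w)) \<in> measurable N (P \<Otimes>\<^sub>M PK)" using rsm rkm by (rule measurable_Pair)
  have setsPQ: "sets (PR \<Otimes>\<^sub>M Q) = sets (P \<Otimes>\<^sub>M PK)"
    by (rule sets_pair_measure_cong) (simp_all add: PR_def Q_def)
  define T where "T = (\<lambda>p::(nat \<Rightarrow> 'e) \<times> (nat \<Rightarrow> 'e). (h (fst p), snd p k))"
  have Tm: "T \<in> measurable (P \<Otimes>\<^sub>M PK) (borel \<Otimes>\<^sub>M M)"
    unfolding T_def by (intro measurable_Pair measurable_compose[OF measurable_fst hm] measurable_compose[OF measurable_snd compk])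
  have Tm': "T \<in> measurable (PR \<Otimes>\<^sub>M Q) (borel \<Otimes>\<^sub>M M)"
    using Tm measurable_cong_sets[OF setsPQ refl] by blast
  have Trs: "T (rs w, rk w) = (Z w, \<xi> k w)" for w unfolding T_def Zeq rk_def by simp
  define gl' where "gl' = (\<lambda>x. indicator X x *\<^sub>R gl x)"
  have glm[measurable]: "gl' \<in> borel_measurable borel"
    unfolding gl'_def by (rule borel_measurable_continuous_on_indicator[OF borel_closed[OF cX] gl_cont])
  have Gm[measurable]: "(\<lambda>p. G (fst p) (snd p)) \<in> borel_measurable (borel \<Otimes>\<^sub>M M)" by (rule G_meas)
  have Xm[measurable]: "X \<in> sets borel" using cX by simp
  define g where "g = (\<lambda>p::(real^'d) \<times> 'e. indicator X (fst p) * (norm (G (fst p) (snd p) - gl' (fst p)))\<^sup>2)"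
  define hh where "hh = (\<lambda>p::(real^'d) \<times> 'e. indicator X (fst p) * ((G (fst p) (snd p) - gl' (fst p)) \<bullet> (xstar - fst p)))"
  have gm[measurable]: "g \<in> borel_measurable (borel \<Otimes>\<^sub>M M)" unfolding g_def by measurable
  have hhm[measurable]: "hh \<in> borel_measurable (borel \<Otimes>\<^sub>M M)" unfolding hh_def by measurable
  have gZ: "g (Z w, \<xi> k w) = (norm (G (Z w) (\<xi> k w) - gl (Z w)))\<^sup>2" for w
    using ZX[of w] unfolding g_def gl'_def by simp
  have hZ: "hh (Z w, \<xi> k w) = (G (Z w) (\<xi> k w) - gl (Z w)) \<bullet> (xstar - Z w)" for w
    using ZX[of w] unfolding hh_def gl'_def by simp
  have g0: "g p \<ge> 0" for p unfolding g_def by simp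
  have inner_g: "(\<integral>\<^sup>+b. ennreal (g (T (a, b))) \<partial>Q) \<le> ennreal (\<sigma>\<^sup>2)" for a
  proof -
    have me: "(\<lambda>e. ennreal (g (h a, e))) \<in> borel_measurable M"
      using measurable_Pair2[OF gm, of "h a"] by simp
    have "(\<integral>\<^sup>+b. ennreal (g (T (a, b))) \<partial>Q) = (\<integral>\<^sup>+b. ennreal (g (h a, b k)) \<partial>Q)" unfolding T_def by simp
    also have "\<dots> = (\<integral>\<^sup>+e. ennreal (g (h a, e)) \<partial>distr Q M (\<lambda>b. b k))"
      by (rule nn_integral_distr[symmetric]) (use compk me in \<open>simp_all add: Q_def\<close>)
    also have "\<dots> = (\<integral>\<^sup>+e. ennreal (g (h a, e)) \<partial>M)" unfolding Qk ..
    also have "\<dots> \<le> ennreal (\<sigma>\<^sup>2)"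
    proof (cases "h a \<in> X")
      case True
      then show ?thesis using G_var[OF True] unfolding g_def gl'_def by simp
    next
      case False
      then show ?thesis unfolding g_def by simp
    qed
    finally show ?thesis .
  qed
  have gTm: "(\<lambda>p. g (T p)) \<in> borel_measurable (PR \<Otimes>\<^sub>M Q)" using measurable_compose[OF Tm' gm] .
  have gTm2: "(\<lambda>p. g (T p)) \<in> borel_measurable (P \<Otimes>\<^sub>M PK)" using measurable_compose[OF Tm gm] .
  have nn_prod: "(\<integral>\<^sup>+p. ennreal (g (T p)) \<partial>(PR \<Otimes>\<^sub>M Q)) \<le> ennreal (\<sigma>\<^sup>2)"
  proof -
    have "(\<integral>\<^sup>+p. ennreal (g (T p)) \<partial>(PR \<Otimes>\<^sub>M Q)) = (\<integral>\<^sup>+a. (\<integral>\<^sup>+b. ennreal (g (T (a, b))) \<partial>Q) \<partial>PR)"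
      by (rule Q.nn_integral_fst[symmetric]) (use gTm in simp)
    also have "\<dots> \<le> (\<integral>\<^sup>+a. ennreal (\<sigma>\<^sup>2) \<partial>PR)" by (intro nn_integral_mono inner_g)
    also have "\<dots> = ennreal (\<sigma>\<^sup>2)" by (simp add: PR.emeasure_space_1)
    finally show ?thesis .
  qed
  have nn_N: "(\<integral>\<^sup>+w. ennreal ((norm (G (Z w) (\<xi> k w) - gl (Z w)))\<^sup>2) \<partial>N) \<le> ennreal (\<sigma>\<^sup>2)"
  proof -
    have "(\<integral>\<^sup>+w. ennreal ((norm (G (Z w) (\<xi> k w) - gl (Z w)))\<^sup>2) \<partial>N) = (\<integral>\<^sup>+w. ennreal (g (T (rs w, rk w))) \<partial>N)"
      by (simp add: gZ Trs)
    also have "\<dots> = (\<integral>\<^sup>+p. ennreal (g (T p)) \<partial>distr N (P \<Otimes>\<^sub>M PK) (\<lambda>w. (rs w, rk w)))"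
      by (rule nn_integral_distr[symmetric]) (use pairm gTm2 in simp_all)
    also have "\<dots> = (\<integral>\<^sup>+p. ennreal (g (T p)) \<partial>(PR \<Otimes>\<^sub>M Q))" unfolding dist ..
    finally show ?thesis using nn_prod by simp
  qed
  have xim[measurable]: "\<xi> k \<in> measurable N M" by (rule xi_meas)
  have gNm: "(\<lambda>w. (norm (G (Z w) (\<xi> k w) - gl (Z w)))\<^sup>2) \<in> borel_measurable N"
    unfolding gZ[symmetric] by measurable
  have int1: "integrable N (\<lambda>w. (norm (G (Z w) (\<xi> k w) - gl (Z w)))\<^sup>2)"
    using nn_N by (intro integrableI_nonneg gNm) (auto simp: top_unique intro: le_less_trans)
  have bnd1: "(\<integral>w. (norm (G (Z w) (\<xi> k w) - gl (Z w)))\<^sup>2 \<partial>N) \<le> \<sigma>\<^sup>2"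
    by (rule integral_real_bounded[OF _ nn_N]) simp
  have gint: "integrable (PR \<Otimes>\<^sub>M Q) (\<lambda>p. g (T p))"
  proof (rule integrableI_nonneg)
    show "(\<lambda>p. g (T p)) \<in> borel_measurable (PR \<Otimes>\<^sub>M Q)" by (rule gTm)
    show "AE x in PR \<Otimes>\<^sub>M Q. 0 \<le> g (T x)" using g0 by simp
    show "(\<integral>\<^sup>+p. ennreal (g (T p)) \<partial>(PR \<Otimes>\<^sub>M Q)) < \<infinity>" using nn_prod by (simp add: le_less_trans)
  qed
  define D where "D = diameter X"
  have D0: "D \<ge> 0" unfolding D_def by (simp add: diameter_ge_0 compact_imp_bounded X(3))
  have hbound: "norm (hh p) \<le> norm (D * (1 + g p))" for p
  proof (cases "fst p \<in> X")
    case True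
    let ?d = "G (fst p) (snd p) - gl (fst p)"
    have "\<bar>?d \<bullet> (xstar - fst p)\<bar> \<le> norm ?d * norm (xstar - fst p)" by (rule Cauchy_Schwarz_ineq2)
    also have "\<dots> \<le> norm ?d * D"
      using diameter_bounded_bound[OF compact_imp_bounded[OF X(3)] xs True] unfolding D_def
      by (intro mult_left_mono) (auto simp: dist_norm)
    also have "\<dots> \<le> (1 + (norm ?d)\<^sup>2) * D" using D0 le_one_plus_sq[of "norm ?d"] by (intro mult_right_mono) auto
    finally have "\<bar>?d \<bullet> (xstar - fst p)\<bar> \<le> D * (1 + (norm ?d)\<^sup>2)" by (simp add: mult.commute)
    moreover have "0 \<le> D * (1 + (norm ?d)\<^sup>2)" using D0 by simp
    ultimately show ?thesis using True unfolding hh_def g_def gl'_def by simp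
  next
    case False
    then show ?thesis unfolding hh_def g_def using D0 by simp
  qed
  have hTm: "(\<lambda>p. hh (T p)) \<in> borel_measurable (PR \<Otimes>\<^sub>M Q)" using measurable_compose[OF Tm' hhm] .
  have hTm2: "(\<lambda>p. hh (T p)) \<in> borel_measurable (P \<Otimes>\<^sub>M PK)" using measurable_compose[OF Tm hhm] .
  have bint: "integrable (PR \<Otimes>\<^sub>M Q) (\<lambda>p. D * (1 + g (T p)))"
    using gint by (intro integrable_mult_right integrable_add) auto
  have hint: "integrable (PR \<Otimes>\<^sub>M Q) (\<lambda>p. hh (T p))"
    using Bochner_Integration.integrable_bound[OF bint hTm] hbound by simp
  have inner_h: "(\<integral>b. hh (T (a, b)) \<partial>Q) = 0" for a
  proof -
    have me: "(\<lambda>e. hh (h a, e)) \<in> borel_measurable M"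
      using measurable_Pair2[OF hhm, of "h a"] by simp
    have "(\<integral>b. hh (T (a, b)) \<partial>Q) = (\<integral>b. hh (h a, b k) \<partial>Q)" unfolding T_def by simp
    also have "\<dots> = (\<integral>e. hh (h a, e) \<partial>distr Q M (\<lambda>b. b k))"
      by (rule integral_distr[symmetric]) (use compk me in \<open>simp_all add: Q_def\<close>)
    also have "\<dots> = (\<integral>e. hh (h a, e) \<partial>M)" unfolding Qk ..
    also have "\<dots> = 0"
    proof (cases "h a \<in> X")
      case True
      define z where "z = h a"
      have zX: "z \<in> X" using True z_def by simp
      have iG: "integrable M (G z)" and eG: "(\<integral>e. G z e \<partial>M) = gl z" using G_unbiased[OF zX] by auto
      have iD: "integrable M (\<lambda>e. G z e - gl z)" using iG by simp
      have "(\<integral>e. hh (z, e) \<partial>M) = (\<integral>e. (G z e - gl z) \<bullet> (xstar - z) \<partial>M)"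
        using zX unfolding hh_def gl'_def by simp
      also have "\<dots> = (\<integral>e. (G z e - gl z) \<partial>M) \<bullet> (xstar - z)" using iD by simp
      also have "(\<integral>e. (G z e - gl z) \<partial>M) = 0"
        using iG eG by (simp add: Bochner_Integration.integral_diff M.prob_space)
      finally show ?thesis unfolding z_def by simp
    next
      case False then show ?thesis unfolding hh_def by simp
    qed
    finally show ?thesis .
  qed
  have hprod0: "(\<integral>p. hh (T p) \<partial>(PR \<Otimes>\<^sub>M Q)) = 0"
    using PP.integral_fst'[OF hint] inner_h by simp
  have int2: "integrable N (\<lambda>w. (G (Z w) (\<xi> k w) - gl (Z w)) \<bullet> (xstar - Z w))"
  proof -
    have "integrable (distr N (P \<Otimes>\<^sub>M PK) (\<lambda>w. (rs w, rk w))) (\<lambda>p. hh (T p))" using hint unfolding dist .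
    then have "integrable N (\<lambda>w. hh (T (rs w, rk w)))" by (subst (asm) integrable_distr_eq) (use pairm hTm2 in simp_all)
    then show ?thesis unfolding Trs hZ .
  qed
  have eq2: "(\<integral>w. (G (Z w) (\<xi> k w) - gl (Z w)) \<bullet> (xstar - Z w) \<partial>N) = 0"
  proof -
    have "(\<integral>w. (G (Z w) (\<xi> k w) - gl (Z w)) \<bullet> (xstar - Z w) \<partial>N) = (\<integral>w. hh (T (rs w, rk w)) \<partial>N)" unfolding Trs hZ ..
    also have "\<dots> = (\<integral>p. hh (T p) \<partial>distr N (P \<Otimes>\<^sub>M PK) (\<lambda>w. (rs w, rk w)))"
      by (rule integral_distr[symmetric]) (use pairm hTm2 in simp_all)
    also have "\<dots> = 0" unfolding dist[symmetric] by (rule hprod0)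
    finally show ?thesis .
  qed
  show ?thesis using int1 bnd1 int2 eq2 by blast
qed



lemma meas_N:
  fixes Y :: "(real^'l) set" and F :: "real^'d^'l" and X :: "(real^'d) set"
    and G :: "real^'d \<Rightarrow> 'e \<Rightarrow> real^'d" and M :: "'e measure" and N :: "'w measure"
  assumes X: "X \<noteq> {}" "convex X" "closed X" and Y: "Y \<noteq> {}" "convex Y" "compact Y" and s: "s > 0"
    and G_meas: "(\<lambda>p. G (fst p) (snd p)) \<in> borel_measurable (borel \<Otimes>\<^sub>M M)"
    and xi_meas: "\<And>k. \<xi> k \<in> measurable N M"
  shows "(\<lambda>w. snd (spdhg l G F X Y s beta y0 x0 (\<lambda>i. \<xi> i w) j)) \<in> borel_measurable N \<and>
         (\<lambda>w. fst (spdhg l G F X Y s beta y0 x0 (\<lambda>i. \<xi> i w) j)) \<in> borel_measurable N"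
proof -
  define rs where "rs = (\<lambda>w. restrict (\<lambda>i. \<xi> i w) {..<j})"
  have rsm: "rs \<in> measurable N (PiM {..<j} (\<lambda>_. M))" unfolding rs_def
    using xi_meas by (intro measurable_restrict) auto
  have eq: "spdhg l G F X Y s beta y0 x0 (\<lambda>i. \<xi> i w) j = spdhg l G F X Y s beta y0 x0 (rs w) j" for w
    unfolding rs_def by (intro spdhg_dep) auto
  have m: "(\<lambda>r. fst (spdhg l G F X Y s beta y0 x0 r j)) \<in> borel_measurable (PiM {..<j} (\<lambda>_. M))
      \<and> (\<lambda>r. snd (spdhg l G F X Y s beta y0 x0 r j)) \<in> borel_measurable (PiM {..<j} (\<lambda>_. M))"
    using meas_iter[OF X Y s G_meas, of j j] by simp
  show ?thesis unfolding eq using measurable_compose[OF rsm conjunct1[OF m]] measurable_compose[OF rsm conjunct2[OF m]] by blast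
qed

lemma final_aux: "(k::real) \<ge> 0 \<Longrightarrow> C \<ge> 0 \<Longrightarrow> mu > 0 \<Longrightarrow> (k + 1) * (C / (mu * (k + 2))) \<le> C / mu"
proof -
  assume k: "k \<ge> 0" and C: "C \<ge> 0" and mu: "mu > 0"
  have "(k + 1) * (C / (mu * (k + 2))) = ((k + 1) / (k + 2)) * (C / mu)" using k by (simp add: field_simps)
  also have "\<dots> \<le> 1 * (C / mu)" using k C mu by (intro mult_right_mono) auto
  finally show ?thesis by simp
qed

lemma final_sum:
  fixes C mu :: real
  assumes C: "C \<ge> 0" and mu: "mu > 0"
  shows "(\<Sum>k\<le>t. 2 * real (Suc k) / ((real t + 1) * (real t + 2)) * (C / (mu * (real k + 2)))) \<le> 2 * C / (mu * (real t + 2))"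
proof -
  define c0 where "c0 = 2 / ((real t + 1) * (real t + 2))"
  have c0: "c0 \<ge> 0" unfolding c0_def by simp
  have "(\<Sum>k\<le>t. 2 * real (Suc k) / ((real t + 1) * (real t + 2)) * (C / (mu * (real k + 2))))
      = (\<Sum>k\<le>t. c0 * ((real k + 1) * (C / (mu * (real k + 2)))))"
    unfolding c0_def by (intro sum.cong) auto
  also have "\<dots> \<le> (\<Sum>k\<le>t. c0 * (C / mu))"
    using final_aux C mu c0 by (intro sum_mono mult_left_mono) auto
  also have "\<dots> = (real t + 1) * c0 * (C / mu)" by simp
  also have "\<dots> = 2 * C / (mu * (real t + 2))"
  proof -
    have "(real t + 1) * c0 = 2 / (real t + 2)"
    proof -
      have p: "(real t + 1) * (real t + 2) \<noteq> 0" by simp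
      have "c0 * ((real t + 1) * (real t + 2)) = 2" unfolding c0_def using p by simp
      then have "c0 * (real t + 1) = 2 / (real t + 2)" by (simp add: eq_divide_eq mult.assoc)
      then show ?thesis by (simp add: mult.commute)
    qed
    then show ?thesis using mu by simp
  qed
  finally show ?thesis .
qed

theorem theorem5:
  fixes X :: "(real^'d) set" and Y :: "(real^'l) set" and F :: "real^'d^'l"
    and l :: "real^'d \<Rightarrow> real" and gl :: "real^'d \<Rightarrow> real^'d"
    and L \<mu> \<sigma> s :: real
    and M :: "'e measure" and G :: "real^'d \<Rightarrow> 'e \<Rightarrow> real^'d"
    and N :: "'w measure" and \<xi> :: "nat \<Rightarrow> 'w \<Rightarrow> 'e"
    and x0 :: "real^'d" and y0 :: "real^'l" and ystar :: "real^'l" and xstar :: "real^'d"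
    and t :: nat
  assumes X: "X \<noteq> {}" "convex X" "compact X"
    and Y: "Y \<noteq> {}" "convex Y" "compact Y"
    and l_convex: "convex_on X l"
    and l_deriv: "\<And>x. x \<in> X \<Longrightarrow> (l has_derivative (\<lambda>h. gl x \<bullet> h)) (at x within X)"
    and gl_cont: "continuous_on X gl"
    and gl_lip: "\<And>x1 x2. x1 \<in> X \<Longrightarrow> x2 \<in> X \<Longrightarrow> norm (gl x1 - gl x2) \<le> L * norm (x1 - x2)"
    and mu_pos: "\<mu> > 0"
    and strong: "\<And>x y. x \<in> X \<Longrightarrow> y \<in> X \<Longrightarrow>
                   l y - l x - (y - x) \<bullet> gl x \<ge> \<mu> / 2 * (norm (y - x))\<^sup>2"
    and M_prob: "prob_space M"
    and G_meas: "(\<lambda>p. G (fst p) (snd p)) \<in> borel_measurable (borel \<Otimes>\<^sub>M M)"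
    and G_unbiased: "\<And>x. x \<in> X \<Longrightarrow> integrable M (G x) \<and> (\<integral>e. G x e \<partial>M) = gl x"
    and G_var: "\<And>x. x \<in> X \<Longrightarrow> (\<integral>\<^sup>+e. ennreal ((norm (G x e - gl x))\<^sup>2) \<partial>M) \<le> ennreal (\<sigma>\<^sup>2)"
    and G_subgauss: "\<And>x. x \<in> X \<Longrightarrow>
          (\<integral>\<^sup>+e. ennreal (exp ((norm (G x e - gl x))\<^sup>2 / \<sigma>\<^sup>2)) \<partial>M) \<le> ennreal (exp 1)"
    and sigma_pos: "\<sigma> > 0"
    and N_prob: "prob_space N"
    and xi_meas: "\<And>k. \<xi> k \<in> measurable N M"
    and xi_distr: "\<And>k. distr N M (\<xi> k) = M"
    and xi_indep: "prob_space.indep_vars N (\<lambda>_. M) \<xi> UNIV"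
    and s_pos: "s > 0"
    and x0: "x0 \<in> X" and y0: "y0 \<in> Y"
    and saddle: "ystar \<in> Y" "xstar \<in> X"
        "\<And>y x. y \<in> Y \<Longrightarrow> x \<in> X \<Longrightarrow>
           Psad l F y xstar \<le> Psad l F ystar xstar \<and> Psad l F ystar xstar \<le> Psad l F ystar x"
  fixes beta alpha :: "nat \<Rightarrow> real"
  assumes beta_def: "beta = (\<lambda>j::nat. 2 / (\<mu> * (real j + 1) + 2 * L))"
    and alpha_def: "alpha = (\<lambda>j::nat. 2 * real j / ((real t + 1) * (real t + 2)))"
  defines "gap \<equiv> (\<lambda>w. Psad l F ystar (xbar l G F X Y s beta y0 x0 alpha (\<lambda>k. \<xi> k w) t)
                   - Psad l F (ybar l G F X Y s beta y0 x0 alpha (\<lambda>k. \<xi> k w) t) xstar)"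
  shows "integrable N gap \<and> 0 \<le> (\<integral>w. gap w \<partial>N) \<and>
         (\<integral>w. gap w \<partial>N) \<le> (diameter Y)\<^sup>2 / (s * (real t + 2)) + L * (diameter X)\<^sup>2 / (real t + 2)
           + (4 * lambda_max (transpose F ** F) * (diameter Y)\<^sup>2 + 4 * \<sigma>\<^sup>2) / (\<mu> * (real t + 2))"

proof -
  interpret N: prob_space N by (rule N_prob)
  have cX: "closed X" using X compact_imp_closed by auto
  have cY: "closed Y" using Y compact_imp_closed by auto
  define lam where "lam = lambda_max (transpose F ** F)"
  have lam: "lam \<ge> 0" "\<And>d. (norm (F *v d))\<^sup>2 \<le> lam * (norm d)\<^sup>2"
    using lambda_max_prop[of F] unfolding lam_def by auto
  define DY where "DY = diameter Y"
  define xk where "xk = (\<lambda>k w. snd (spdhg l G F X Y s beta y0 x0 (\<lambda>i. \<xi> i w) k))"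
  define G2 where "G2 = (\<lambda>k w. (norm (G (xk k w) (\<xi> k w) - gl (xk k w)))\<^sup>2)"
  define H where "H = (\<lambda>k w. (G (xk k w) (\<xi> k w) - gl (xk k w)) \<bullet> (xstar - xk k w))"
  define R where "R = (\<lambda>k w. (2 * lam * DY\<^sup>2 + 2 * G2 k w) / (\<mu> * (real k + 2)) + H k w)"
  define K where "K = (diameter Y)\<^sup>2 / (s * (real t + 2)) + L * (diameter X)\<^sup>2 / (real t + 2)"
  define C where "C = 2 * lam * DY\<^sup>2 + 2 * \<sigma>\<^sup>2"
  have ES: "integrable N (G2 k) \<and> integral\<^sup>L N (G2 k) \<le> \<sigma>\<^sup>2 \<and> integrable N (H k) \<and> integral\<^sup>L N (H k) = 0" for k
    using expect_step[OF X Y gl_cont M_prob G_meas G_unbiased G_var N_prob xi_meas xi_distr xi_indep s_pos x0 y0 saddle(2),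
        where l=l and beta=beta and k=k]
    unfolding G2_def H_def xk_def by simp
  have Rint: "integrable N (R k)" for k
  proof -
    have "integrable N (\<lambda>w. (2 * lam * DY\<^sup>2 + 2 * G2 k w) / (\<mu> * (real k + 2)))"
      using ES[of k] by (intro integrable_divide_zero Bochner_Integration.integrable_add integrable_mult_right N.integrable_const) auto
    then show ?thesis unfolding R_def using ES[of k] by (intro Bochner_Integration.integrable_add) auto
  qed
  have Rle: "integral\<^sup>L N (R k) \<le> C / (\<mu> * (real k + 2))" for k
  proof -
    have i1: "integrable N (\<lambda>w. (2 * lam * DY\<^sup>2 + 2 * G2 k w) / (\<mu> * (real k + 2)))"
      using ES[of k] by (intro integrable_divide_zero Bochner_Integration.integrable_add integrable_mult_right N.integrable_const) auto
    have "integral\<^sup>L N (R k) = integral\<^sup>L N (\<lambda>w. (2 * lam * DY\<^sup>2 + 2 * G2 k w) / (\<mu> * (real k + 2))) + integral\<^sup>L N (H k)"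
      unfolding R_def using i1 ES[of k] by (intro Bochner_Integration.integral_add) auto
    also have "integral\<^sup>L N (\<lambda>w. (2 * lam * DY\<^sup>2 + 2 * G2 k w) / (\<mu> * (real k + 2)))
        = integral\<^sup>L N (\<lambda>w. 2 * lam * DY\<^sup>2 + 2 * G2 k w) / (\<mu> * (real k + 2))"
      by (rule integral_divide_zero)
    also have "integral\<^sup>L N (\<lambda>w. 2 * lam * DY\<^sup>2 + 2 * G2 k w) = 2 * lam * DY\<^sup>2 + 2 * integral\<^sup>L N (G2 k)"
      using ES[of k] by (subst Bochner_Integration.integral_add) (auto simp: N.prob_space)
    finally have e: "integral\<^sup>L N (R k) = (2 * lam * DY\<^sup>2 + 2 * integral\<^sup>L N (G2 k)) / (\<mu> * (real k + 2))"
      using ES[of k] by simp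
    have "(2 * lam * DY\<^sup>2 + 2 * integral\<^sup>L N (G2 k)) / (\<mu> * (real k + 2)) \<le> C / (\<mu> * (real k + 2))"
      unfolding C_def using ES[of k] mu_pos by (intro divide_right_mono) auto
    then show ?thesis using e by simp
  qed
  have pw: "gap w \<le> K + (\<Sum>k\<le>t. alpha (Suc k) * R k w)" for w
    using pointwise[OF X Y l_convex l_deriv gl_lip mu_pos strong s_pos x0 y0 saddle(1,2) lam beta_def alpha_def,
        where G=G and w="\<lambda>k. \<xi> k w"]
    unfolding gap_def K_def R_def G2_def H_def xk_def DY_def by simp
  have anon: "alpha (Suc k) \<ge> 0" for k unfolding alpha_def by simp
  have sa: "(\<Sum>k\<le>t. alpha (Suc k)) = 1"
  proof -
    have "(\<Sum>k\<le>t. alpha (Suc k)) = (\<Sum>k\<le>t. (real k + 1)) * (2 / ((real t + 1) * (real t + 2)))"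
      unfolding alpha_def sum_distrib_right by (intro sum.cong) auto
    also have "\<dots> = 1" unfolding sum_kp1 by simp
    finally show ?thesis .
  qed
  have inX: "snd (spdhg l G F X Y s beta y0 x0 v j) \<in> X" and inY: "fst (spdhg l G F X Y s beta y0 x0 v j) \<in> Y" for v j
    using spdhg_in[OF X(1) cX Y s_pos x0 y0] by blast+
  have xbX: "xbar l G F X Y s beta y0 x0 alpha v t \<in> X" for v
    unfolding xbar_def by (rule convex_sum[OF finite_atMost X(2) sa anon inX])
  have ybY: "ybar l G F X Y s beta y0 x0 alpha v t \<in> Y" for v
    unfolding ybar_def by (rule convex_sum[OF finite_atMost Y(2) sa anon inY])
  have gap0: "gap w \<ge> 0" for w
  proof -
    have "Psad l F ystar xstar \<le> Psad l F ystar (xbar l G F X Y s beta y0 x0 alpha (\<lambda>k. \<xi> k w) t)"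
      using saddle(3)[OF saddle(1) xbX] by simp
    moreover have "Psad l F (ybar l G F X Y s beta y0 x0 alpha (\<lambda>k. \<xi> k w) t) xstar \<le> Psad l F ystar xstar"
      using saddle(3)[OF ybY saddle(2)] by simp
    ultimately show ?thesis unfolding gap_def by simp
  qed
  have lcont: "continuous_on X l"
    using l_deriv has_derivative_continuous continuous_on_eq_continuous_within by blast
  define l' where "l' = (\<lambda>x. indicator X x *\<^sub>R l x)"
  have l'm[measurable]: "l' \<in> borel_measurable borel"
    unfolding l'_def by (rule borel_measurable_continuous_on_indicator[OF borel_closed[OF cX] lcont])
  have [measurable]: "(\<lambda>x. F *v x) \<in> borel_measurable borel"
    by (intro borel_measurable_continuous_onI matrix_vector_mult_linear_continuous_on)
  have itm: "(\<lambda>w. snd (spdhg l G F X Y s beta y0 x0 (\<lambda>i. \<xi> i w) j)) \<in> borel_measurable N \<and>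
             (\<lambda>w. fst (spdhg l G F X Y s beta y0 x0 (\<lambda>i. \<xi> i w) j)) \<in> borel_measurable N" for j
    using meas_N[where \<xi>=\<xi> and N=N and l=l and F=F and beta=beta and j=j, OF X(1,2) cX Y s_pos G_meas xi_meas] by blast
  have xbm[measurable]: "(\<lambda>w. xbar l G F X Y s beta y0 x0 alpha (\<lambda>k. \<xi> k w) t) \<in> borel_measurable N"
    unfolding xbar_def using itm by (intro borel_measurable_sum borel_measurable_scaleR) (auto simp del: spdhg.simps)
  have ybm[measurable]: "(\<lambda>w. ybar l G F X Y s beta y0 x0 alpha (\<lambda>k. \<xi> k w) t) \<in> borel_measurable N"
    unfolding ybar_def using itm by (intro borel_measurable_sum borel_measurable_scaleR) (auto simp del: spdhg.simps)
  have gapeq: "gap w = l' (xbar l G F X Y s beta y0 x0 alpha (\<lambda>k. \<xi> k w) t)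
      + ystar \<bullet> (F *v xbar l G F X Y s beta y0 x0 alpha (\<lambda>k. \<xi> k w) t)
      - (l xstar + ybar l G F X Y s beta y0 x0 alpha (\<lambda>k. \<xi> k w) t \<bullet> (F *v xstar))" for w
    unfolding gap_def Psad_def l'_def using xbX by simp
  have gapm: "gap \<in> borel_measurable N" unfolding gapeq by measurable
  have RHSint: "integrable N (\<lambda>w. K + (\<Sum>k\<le>t. alpha (Suc k) * R k w))"
    using Rint by (intro Bochner_Integration.integrable_add N.integrable_const integrable_sum integrable_mult_right) auto
  have gapint: "integrable N gap"
  proof (rule Bochner_Integration.integrable_bound[OF RHSint gapm])
    show "AE x in N. norm (gap x) \<le> norm (K + (\<Sum>k\<le>t. alpha (Suc k) * R k x))"
      using pw gap0 by (auto intro!: AE_I2 simp: abs_le_iff) (smt (verit))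
  qed
  have int0: "0 \<le> (\<integral>w. gap w \<partial>N)" using gap0 by (intro integral_nonneg_AE AE_I2) auto
  have "(\<integral>w. gap w \<partial>N) \<le> (\<integral>w. K + (\<Sum>k\<le>t. alpha (Suc k) * R k w) \<partial>N)"
    using gapint RHSint pw by (intro integral_mono) auto
  also have "(\<integral>w. K + (\<Sum>k\<le>t. alpha (Suc k) * R k w) \<partial>N) = K + (\<Sum>k\<le>t. alpha (Suc k) * integral\<^sup>L N (R k))"
  proof -
    have "(\<integral>w. K + (\<Sum>k\<le>t. alpha (Suc k) * R k w) \<partial>N) = K + (\<integral>w. (\<Sum>k\<le>t. alpha (Suc k) * R k w) \<partial>N)"
      using Rint by (subst Bochner_Integration.integral_add) (auto simp: N.prob_space intro!: integrable_sum integrable_mult_right)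
    also have "(\<integral>w. (\<Sum>k\<le>t. alpha (Suc k) * R k w) \<partial>N) = (\<Sum>k\<le>t. (\<integral>w. alpha (Suc k) * R k w \<partial>N))"
      by (rule Bochner_Integration.integral_sum) (use Rint in auto)
    also have "\<dots> = (\<Sum>k\<le>t. alpha (Suc k) * integral\<^sup>L N (R k))" by simp
    finally show ?thesis .
  qed
  also have "\<dots> \<le> K + (\<Sum>k\<le>t. alpha (Suc k) * (C / (\<mu> * (real k + 2))))"
    using Rle anon by (intro add_left_mono sum_mono mult_left_mono) auto
  also have "(\<Sum>k\<le>t. alpha (Suc k) * (C / (\<mu> * (real k + 2)))) \<le> 2 * C / (\<mu> * (real t + 2))"
    unfolding alpha_def by (rule final_sum) (use lam mu_pos in \<open>auto simp: C_def\<close>)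
  finally have fin: "(\<integral>w. gap w \<partial>N) \<le> K + 2 * C / (\<mu> * (real t + 2))" by simp
  have "2 * C = 4 * lambda_max (transpose F ** F) * (diameter Y)\<^sup>2 + 4 * \<sigma>\<^sup>2"
    unfolding C_def lam_def DY_def by simp
  then show ?thesis using gapint int0 fin unfolding K_def by simp
qed


end
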